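(* The synthesis problem in $\lambda_H$ is undecidable: there is no algorithm that, given a finite component library $\Lambda$ (over a finite set of type constructors) and a ground query type $t$, decides whether there exists a normal-form term $E$ with $\cdot\vdash E:t$.
   Context: Fix a set of type constructors, each with a fixed arity, and an infinite set of type variables. Base types are $B ::= \tau \mid C\,B_1\ldots B_k$; ground base types $b$ contain no type variables. Types are $T ::= B\mid B\to T$; ground types $t ::= b\mid b\to t$. A polytype is $\forall\tau_1\ldots\tau_n.T$. A component library $\Lambda$ is a finite map from component names $c$ to polytypes; the arity of $c$ is the number of arrows in $\Lambda(c)$. A substitution $\sigma$ maps type variables to base types (identity elsewhere). Terms ($\lambda_H$, η-long): application terms $e::=x\mid c(e_1,\ldots,e_m)$ with $m$ the arity of $c$; normal-form terms $E::=e\mid\lambda x.E$. A typing environment $\Gamma$ maps variables to ground base types. Declarative typing $\Gamma\vdash E:t$: (Var) if $\Gamma(x)=b$ then $\Gamma\vdash x:b$; (App) if $\Lambda(c)=\forall\bar\tau.T$, $\sigma T=b_1\to\cdots\to b_m\to b$ is ground and $\Gamma\vdash e_i:b_i$ for all $i$, then $\Gamma\vdash c(e_1,\ldots,e_m):b$; (Fun) if $\Gamma,x{:}b\vdash E:t$ then $\Gamma\vdash\lambda x.E:b\to t$. A synthesis problem is a pair $(\Lambda,t)$ and a solution is a normal-form term $E$ with $\cdot\vdash E:t$. *)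

theory Defs
  imports Main "HOL-Library.Nat_Bijection"
begin

datatype recf =
    Zero
  | Succ
  | Proj nat
  | Comp recf "recf list"
  | Prim recf recf
  | Mn recf

inductive eval :: "recf \<Rightarrow> nat list \<Rightarrow> nat \<Rightarrow> bool" where
  eval_Zero: "eval Zero xs 0"
| eval_Succ: "eval Succ (x # xs) (Suc x)"
| eval_Proj: "i < length xs \<Longrightarrow> eval (Proj i) xs (xs ! i)"
| eval_Comp: "list_all2 (\<lambda>g y. eval g xs y) gs ys \<Longrightarrow> eval f ys z \<Longrightarrow> eval (Comp f gs) xs z"
| eval_Prim0: "eval f xs y \<Longrightarrow> eval (Prim f g) (0 # xs) y"
| eval_PrimS: "eval (Prim f g) (n # xs) y \<Longrightarrow> eval g (y # n # xs) z
                 \<Longrightarrow> eval (Prim f g) (Suc n # xs) z"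
| eval_Mn: "eval f (n # xs) 0 \<Longrightarrow> (\<forall>m<n. \<exists>y. eval f (m # xs) (Suc y))
                 \<Longrightarrow> eval (Mn f) xs n"

definition decidable :: "nat set \<Rightarrow> bool" where
  "decidable A \<longleftrightarrow> (\<exists>f. \<forall>n. (n \<in> A \<longrightarrow> eval f [n] 0) \<and> (n \<notin> A \<longrightarrow> eval f [n] 1))"

text \<open>A type constructor is identified by a pair (name, arity); thus every constructor has a
  fixed arity, and any finite signature of constructors is available.  Type variables are nats.\<close>
type_synonym tcon = "nat \<times> nat"

datatype btype = TVar nat | TCon tcon "btype list"

datatype ty = Base btype | Arr btype ty

type_synonym polytype = "nat list \<times> ty"

fun wf_btype :: "btype \<Rightarrow> bool" where
  "wf_btype (TVar a) = True"
| "wf_btype (TCon c bs) = (length bs = snd c \<and> (\<forall>b\<in>set bs. wf_btype b))"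

fun wf_ty :: "ty \<Rightarrow> bool" where
  "wf_ty (Base b) = wf_btype b"
| "wf_ty (Arr b t) = (wf_btype b \<and> wf_ty t)"

fun tvars_b :: "btype \<Rightarrow> nat set" where
  "tvars_b (TVar a) = {a}"
| "tvars_b (TCon c bs) = (\<Union>b\<in>set bs. tvars_b b)"

fun tvars :: "ty \<Rightarrow> nat set" where
  "tvars (Base b) = tvars_b b"
| "tvars (Arr b t) = tvars_b b \<union> tvars t"

definition ground_b :: "btype \<Rightarrow> bool" where
  "ground_b b \<longleftrightarrow> tvars_b b = {}"

definition ground_ty :: "ty \<Rightarrow> bool" where
  "ground_ty t \<longleftrightarrow> tvars t = {}"

fun subst_b :: "(nat \<Rightarrow> btype) \<Rightarrow> btype \<Rightarrow> btype" where
  "subst_b \<sigma> (TVar a) = \<sigma> a"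
| "subst_b \<sigma> (TCon c bs) = TCon c (map (subst_b \<sigma>) bs)"

fun subst_ty :: "(nat \<Rightarrow> btype) \<Rightarrow> ty \<Rightarrow> ty" where
  "subst_ty \<sigma> (Base b) = Base (subst_b \<sigma> b)"
| "subst_ty \<sigma> (Arr b t) = Arr (subst_b \<sigma> b) (subst_ty \<sigma> t)"

fun args :: "ty \<Rightarrow> btype list" where
  "args (Base b) = []"
| "args (Arr b t) = b # args t"

fun res :: "ty \<Rightarrow> btype" where
  "res (Base b) = b"
| "res (Arr b t) = res t"

type_synonym library = "(nat \<times> polytype) list"

definition wf_poly :: "polytype \<Rightarrow> bool" where
  "wf_poly p \<longleftrightarrow> wf_ty (snd p) \<and> tvars (snd p) \<subseteq> set (fst p)"

definition wf_library :: "library \<Rightarrow> bool" where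
  "wf_library L \<longleftrightarrow> distinct (map fst L) \<and> (\<forall>(c, p)\<in>set L. wf_poly p)"

datatype aterm = V nat | C nat "aterm list"

datatype nterm = A aterm | L nat nterm

inductive has_type_a :: "library \<Rightarrow> (nat \<rightharpoonup> btype) \<Rightarrow> aterm \<Rightarrow> btype \<Rightarrow> bool" where
  T_Var: "\<Gamma> x = Some b \<Longrightarrow> has_type_a Lib \<Gamma> (V x) b"
| T_App: "map_of Lib c = Some (vs, T) \<Longrightarrow> (\<forall>a. wf_btype (\<sigma> a)) \<Longrightarrow>
          ground_ty (subst_ty \<sigma> T) \<Longrightarrow>
          args (subst_ty \<sigma> T) = bs \<Longrightarrow> res (subst_ty \<sigma> T) = b \<Longrightarrow>
          list_all2 (has_type_a Lib \<Gamma>) es bs \<Longrightarrow>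
          has_type_a Lib \<Gamma> (C c es) b"

inductive has_type :: "library \<Rightarrow> (nat \<rightharpoonup> btype) \<Rightarrow> nterm \<Rightarrow> ty \<Rightarrow> bool" where
  T_Base: "has_type_a Lib \<Gamma> e b \<Longrightarrow> has_type Lib \<Gamma> (A e) (Base b)"
| T_Fun: "has_type Lib (\<Gamma>(x \<mapsto> b)) E t \<Longrightarrow> has_type Lib \<Gamma> (L x E) (Arr b t)"

fun enc_b :: "btype \<Rightarrow> nat" where
  "enc_b (TVar a) = prod_encode (0, a)"
| "enc_b (TCon c bs) = prod_encode (1, prod_encode (prod_encode c, list_encode (map enc_b bs)))"

fun enc_ty :: "ty \<Rightarrow> nat" where
  "enc_ty (Base b) = prod_encode (0, enc_b b)"
| "enc_ty (Arr b t) = prod_encode (1, prod_encode (enc_b b, enc_ty t))"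

definition enc_poly :: "polytype \<Rightarrow> nat" where
  "enc_poly p = prod_encode (list_encode (fst p), enc_ty (snd p))"

definition enc_library :: "library \<Rightarrow> nat" where
  "enc_library Lib = list_encode (map (\<lambda>(c, p). prod_encode (c, enc_poly p)) Lib)"

definition enc_problem :: "library \<Rightarrow> ty \<Rightarrow> nat" where
  "enc_problem Lib t = prod_encode (enc_library Lib, enc_ty t)"

definition SYNTH :: "nat set" where
  "SYNTH = {enc_problem Lib t | Lib t. wf_library Lib \<and> wf_ty t \<and> ground_ty t \<and>
                                      (\<exists>E. has_type Lib Map.empty E t)}"

end

theory Submission
  imports Defs
begin


inductive_cases evZeroE: "eval Zero xs y"
inductive_cases evSuccE: "eval Succ xs y"
inductive_cases evProjE: "eval (Proj i) xs y"
inductive_cases evCompE: "eval (Comp f gs) xs y"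
inductive_cases evPrimE: "eval (Prim f g) xs y"
inductive_cases evMnE: "eval (Mn f) xs y"

lemma la2_det:
  "list_all2 (\<lambda>g y. eval g xs y \<and> (\<forall>y'. eval g xs y' \<longrightarrow> y = y')) gs ys \<Longrightarrow>
   list_all2 (\<lambda>g y. eval g xs y) gs ys' \<Longrightarrow> ys = ys'"
proof (induction gs ys arbitrary: ys' rule: list_all2_induct)
  case Nil then show ?case by simp
next
  case (Cons g gs y ys)
  then show ?case by (cases ys') auto
qed

lemma eval_det: "eval f xs y \<Longrightarrow> eval f xs y' \<Longrightarrow> y = y'"
proof (induction arbitrary: y' rule: eval.induct)
  case (eval_Zero xs) from eval_Zero.prems show ?case by (rule evZeroE) simp
next
  case (eval_Succ x xs) from eval_Succ.prems show ?case by (rule evSuccE) simp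
next
  case (eval_Proj i xs) from eval_Proj.prems show ?case by (rule evProjE) simp
next
  case (eval_Comp xs gs ys f z)
  from eval_Comp.prems obtain ys' where a: "list_all2 (\<lambda>g y. eval g xs y) gs ys'" and b: "eval f ys' y'"
    by (rule evCompE) simp
  have "ys = ys'" using la2_det[OF eval_Comp.IH(1) a] .
  then show ?case using eval_Comp.IH(2) b by blast
next
  case (eval_Prim0 f xs y g) from eval_Prim0.prems show ?case
    by (rule evPrimE) (use eval_Prim0.IH in auto)
next
  case (eval_PrimS f g n xs y z)
  from eval_PrimS.prems obtain y1 where "eval (Prim f g) (n # xs) y1" "eval g (y1 # n # xs) y'"
    by (rule evPrimE) auto
  then show ?case using eval_PrimS.IH by metis
next
  case (eval_Mn f n xs)
  from eval_Mn.prems have a: "eval f (y' # xs) 0" and b: "\<forall>m<y'. \<exists>y. eval f (m # xs) (Suc y)"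
    by (rule evMnE, simp)+
  show ?case
  proof (rule ccontr)
    assume "n \<noteq> y'"
    then consider "n < y'" | "y' < n" by linarith
    then show False
    proof cases
      case 1 then obtain y where "eval f (n # xs) (Suc y)" using b by blast
      then have "0 = Suc y" using eval_Mn by blast
      then show False by simp
    next
      case 2 then obtain y where "eval f (y' # xs) (Suc y)" "\<forall>z. eval f (y' # xs) z \<longrightarrow> Suc y = z"
        using eval_Mn by blast
      then show False using a by fastforce
    qed
  qed
qed

lemma comp1: "eval f [a] r \<Longrightarrow> eval g xs a \<Longrightarrow> eval (Comp f [g]) xs r"
  by (rule eval_Comp[of _ _ "[a]"]) auto
lemma comp2: "eval f [a,b] r \<Longrightarrow> eval g1 xs a \<Longrightarrow> eval g2 xs b \<Longrightarrow> eval (Comp f [g1,g2]) xs r"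
  by (rule eval_Comp[of _ _ "[a,b]"]) auto

definition ADD :: recf where "ADD = Prim (Proj 0) (Comp Succ [Proj 0])"

lemma ADD: "eval ADD [a, b] (a + b)"
proof (induction a)
  case 0 show ?case unfolding ADD_def using eval_Prim0[OF eval_Proj[of 0 "[b]"]] by simp
next
  case (Suc a)
  have "eval (Comp Succ [Proj 0]) [a + b, a, b] (Suc (a + b))"
    by (rule comp1[of _ "a+b"]) (auto intro: eval.intros eval_Proj[of 0 "[a+b,a,b]", simplified])
  then show ?case using eval_PrimS Suc unfolding ADD_def by fastforce
qed

definition TRI :: recf where "TRI = Prim Zero (Comp ADD [Proj 0, Comp Succ [Proj 1]])"

lemma TRI: "eval TRI [n] (triangle n)"
proof (induction n)
  case 0 show ?case unfolding TRI_def using eval_Prim0[OF eval_Zero[of "[]"]] by simp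
next
  case (Suc n)
  have "eval (Comp ADD [Proj 0, Comp Succ [Proj 1]]) [triangle n, n] (triangle n + Suc n)"
    by (rule comp2[OF ADD]) (auto intro: eval.intros comp1 eval_Proj[of 0 "[triangle n, n]", simplified]
         eval_Proj[of 1 "[triangle n, n]", simplified])
  then show ?case using eval_PrimS Suc unfolding TRI_def by (fastforce simp: triangle_Suc)
qed

definition PE :: recf where "PE = Comp ADD [Comp TRI [Comp ADD [Proj 0, Proj 1]], Proj 0]"

lemma proj0: "eval (Proj 0) (x # xs) x" using eval_Proj[of 0 "x#xs"] by simp
lemma proj1: "eval (Proj 1) (x # y # xs) y" using eval_Proj[of 1 "x#y#xs"] by simp
lemma proj1': "eval (Proj (Suc 0)) (x # y # xs) y" using eval_Proj[of 1 "x#y#xs"] by simp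

lemma PE: "eval PE [a, b] (prod_encode (a, b))"
  unfolding PE_def prod_encode_def
  by (auto intro!: comp2[OF ADD] comp1[OF TRI] proj0 proj1 proj1')

fun KON :: "nat \<Rightarrow> recf" where
  "KON 0 = Zero"
| "KON (Suc k) = Comp Succ [KON k]"

lemma KON: "eval (KON k) xs k"
  by (induction k) (auto intro: eval.intros comp1)

lemma PE2: "eval g1 xs a \<Longrightarrow> eval g2 xs b \<Longrightarrow> eval (Comp PE [g1, g2]) xs (prod_encode (a, b))"
  by (rule comp2[OF PE])

lemma SUC1: "eval g xs a \<Longrightarrow> eval (Comp Succ [g]) xs (Suc a)"
  by (rule comp1) (auto intro: eval.intros)

definition step :: "nat \<Rightarrow> nat" where
  "step a = prod_encode (1, prod_encode (prod_encode (1, 1), Suc (prod_encode (a, 0))))"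

definition STEP :: recf where
  "STEP = Comp PE [KON 1, Comp PE [KON (prod_encode (1,1)), Comp Succ [Comp PE [Proj 0, KON 0]]]]"

lemma STEP: "eval STEP (a # xs) (step a)"
  unfolding STEP_def step_def by (rule PE2 KON SUC1 proj0)+

definition NE :: "nat \<Rightarrow> recf" where "NE c = Prim (KON c) STEP"

lemma NE: "eval (NE c) [n] ((step ^^ n) c)"
proof (induction n)
  case 0 show ?case unfolding NE_def using eval_Prim0[OF KON[of c "[]"]] by simp
next
  case (Suc n)
  have "eval (Prim (KON c) STEP) [Suc n] (step ((step^^n) c))"
    by (rule eval_PrimS[OF Suc[unfolded NE_def] STEP])
  then show ?case unfolding NE_def by simp
qed



fun tmn :: "nat \<Rightarrow> btype" where
  "tmn 0 = TCon (0,0) []"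
| "tmn (Suc n) = TCon (1,1) [tmn n]"

fun lst :: "btype list \<Rightarrow> btype" where
  "lst [] = TCon (2,0) []"
| "lst (b # bs) = TCon (3,2) [b, lst bs]"

fun tm :: "recf \<Rightarrow> btype" where
  "tm Zero = TCon (4,0) []"
| "tm Succ = TCon (5,0) []"
| "tm (Proj i) = TCon (6,1) [tmn i]"
| "tm (Comp f gs) = TCon (7,2) [tm f, lst (map tm gs)]"
| "tm (Prim f g) = TCon (8,2) [tm f, tm g]"
| "tm (Mn f) = TCon (9,1) [tm f]"

abbreviation LN :: "nat list \<Rightarrow> btype" where "LN xs \<equiv> lst (map tmn xs)"
abbreviation LR :: "recf list \<Rightarrow> btype" where "LR gs \<equiv> lst (map tm gs)"

lemma tmn_inj[simp]: "tmn m = tmn n \<longleftrightarrow> m = n"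
  by (induction m arbitrary: n; case_tac n; simp)

lemma tmn_eq0[simp]: "tmn n = TCon (0,0) [] \<longleftrightarrow> n = 0" by (cases n) auto
lemma tmn_eqS[simp]: "tmn n = TCon (1,1) [U] \<longleftrightarrow> (\<exists>m. n = Suc m \<and> tmn m = U)" by (cases n) auto

lemma L_nil[simp]: "LN xs = TCon (2,0) [] \<longleftrightarrow> xs = []" by (cases xs) auto
lemma L_cons[simp]: "LN xs = TCon (3,2) [U, W] \<longleftrightarrow> (\<exists>y ys. xs = y # ys \<and> tmn y = U \<and> LN ys = W)"
  by (cases xs) auto
lemma L_inj[simp]: "LN xs = LN ys \<longleftrightarrow> xs = ys"
  by (induction xs arbitrary: ys; case_tac ys; simp)

lemma tm_inj_aux: "tm f = tm g \<Longrightarrow> f = g"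
proof (induction f arbitrary: g)
  case (Comp f gs)
  then show ?case
  proof (cases g)
    case (Comp f' gs')
    have "gs = gs'" using Comp.prems Comp.IH(2) unfolding Comp
    proof (induction gs arbitrary: gs')
      case Nil then show ?case by (cases gs') auto
    next
      case (Cons a gs) then show ?case by (cases gs') auto
    qed
    then show ?thesis using Comp.prems Comp.IH(1) unfolding Comp by auto
  qed auto
next
  case Zero then show ?case by (cases g) auto
next
  case Succ then show ?case by (cases g) auto
next
  case Proj then show ?case by (cases g) auto
next
  case Prim then show ?case by (cases g) auto
next
  case Mn then show ?case by (cases g) auto
qed

lemma tm_inj[simp]: "tm f = tm g \<longleftrightarrow> f = g" using tm_inj_aux by blast

lemma LR_inj[simp]: "LR xs = LR ys \<longleftrightarrow> xs = ys"
  by (induction xs arbitrary: ys; case_tac ys; simp)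
lemma LR_nil[simp]: "LR xs = TCon (2,0) [] \<longleftrightarrow> xs = []" by (cases xs) auto
lemma LR_cons[simp]: "LR xs = TCon (3,2) [U, W] \<longleftrightarrow> (\<exists>y ys. xs = y # ys \<and> tm y = U \<and> LR ys = W)"
  by (cases xs) auto

lemma tmn_eqS'[simp]: "tmn n = TCon (Suc 0,Suc 0) [U] \<longleftrightarrow> (\<exists>m. n = Suc m \<and> tmn m = U)" by (cases n) auto
lemma tm_Proj'[simp]: "tm f = TCon (6,Suc 0) [U] \<longleftrightarrow> (\<exists>i. f = Proj i \<and> tmn i = U)" by (cases f) auto
lemma tm_Mn'[simp]: "tm f = TCon (9,Suc 0) [U] \<longleftrightarrow> (\<exists>f1. f = Mn f1 \<and> tm f1 = U)" by (cases f) auto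
lemma tm_Zero[simp]: "tm f = TCon (4,0) [] \<longleftrightarrow> f = Zero" by (cases f) auto
lemma tm_Succ[simp]: "tm f = TCon (5,0) [] \<longleftrightarrow> f = Succ" by (cases f) auto
lemma tm_Proj[simp]: "tm f = TCon (6,1) [U] \<longleftrightarrow> (\<exists>i. f = Proj i \<and> tmn i = U)" by (cases f) auto
lemma tm_Comp[simp]: "tm f = TCon (7,2) [U, W] \<longleftrightarrow> (\<exists>f1 gs. f = Comp f1 gs \<and> tm f1 = U \<and> LR gs = W)"
  by (cases f) auto
lemma tm_Prim[simp]: "tm f = TCon (8,2) [U, W] \<longleftrightarrow> (\<exists>f1 g1. f = Prim f1 g1 \<and> tm f1 = U \<and> tm g1 = W)"
  by (cases f) auto
lemma tm_Mn[simp]: "tm f = TCon (9,1) [U] \<longleftrightarrow> (\<exists>f1. f = Mn f1 \<and> tm f1 = U)" by (cases f) auto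

section \<open>Library\<close>

abbreviation v :: "nat \<Rightarrow> btype" where "v i \<equiv> TVar i"
abbreviation "EV a b c \<equiv> TCon (10,3) [a,b,c]"
abbreviation "EVS a b c \<equiv> TCon (11,3) [a,b,c]"
abbreviation "NTH a b c \<equiv> TCon (12,3) [a,b,c]"
abbreviation "MNB a b c \<equiv> TCon (13,3) [a,b,c]"
abbreviation "HALT a b \<equiv> TCon (14,2) [a,b]"
abbreviation "ZZ \<equiv> TCon (0,0) []"
abbreviation "SS a \<equiv> TCon (1,1) [a]"
abbreviation "NIL \<equiv> TCon (2,0) []"
abbreviation "CONS a b \<equiv> TCon (3,2) [a,b]"

definition CL :: "ty list" where
  "CL = [
    Base (EV (TCon (4,0) []) (v 0) ZZ),
    Base (EV (TCon (5,0) []) (CONS (v 0) (v 1)) (SS (v 0))),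
    Arr (NTH (v 1) (v 0) (v 2)) (Base (EV (TCon (6,1) [v 0]) (v 1) (v 2))),
    Arr (EVS (v 1) (v 2) (v 3)) (Arr (EV (v 0) (v 3) (v 4)) (Base (EV (TCon (7,2) [v 0, v 1]) (v 2) (v 4)))),
    Base (EVS NIL (v 0) NIL),
    Arr (EV (v 0) (v 2) (v 3)) (Arr (EVS (v 1) (v 2) (v 4)) (Base (EVS (CONS (v 0) (v 1)) (v 2) (CONS (v 3) (v 4))))),
    Arr (EV (v 0) (v 2) (v 3)) (Base (EV (TCon (8,2) [v 0, v 1]) (CONS ZZ (v 2)) (v 3))),
    Arr (EV (TCon (8,2) [v 0, v 1]) (CONS (v 2) (v 3)) (v 4))
      (Arr (EV (v 1) (CONS (v 4) (CONS (v 2) (v 3))) (v 5))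
        (Base (EV (TCon (8,2) [v 0, v 1]) (CONS (SS (v 2)) (v 3)) (v 5)))),
    Arr (EV (v 0) (CONS (v 2) (v 1)) ZZ) (Arr (MNB (v 0) (v 1) (v 2)) (Base (EV (TCon (9,1) [v 0]) (v 1) (v 2)))),
    Base (MNB (v 0) (v 1) ZZ),
    Arr (MNB (v 0) (v 1) (v 2)) (Arr (EV (v 0) (CONS (v 2) (v 1)) (SS (v 3))) (Base (MNB (v 0) (v 1) (SS (v 2))))),
    Base (NTH (CONS (v 0) (v 1)) ZZ (v 0)),
    Arr (NTH (v 1) (v 2) (v 3)) (Base (NTH (CONS (v 0) (v 1)) (SS (v 2)) (v 3))),
    Arr (EV (v 0) (CONS (v 1) NIL) (v 2)) (Base (HALT (v 0) (v 1)))
  ]"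

definition Lib0 :: library where
  "Lib0 = map (\<lambda>i. (i, ([0..<10], CL ! i))) [0..<length CL]"

lemma map_of_map: "map_of (map (\<lambda>i. (i, f i)) xs) c = (if c \<in> set xs then Some (f c) else None)"
  by (induction xs) auto

lemma map_of_Lib0: "map_of Lib0 c = Some p \<longleftrightarrow> c < length CL \<and> p = ([0..<10], CL ! c)"
  unfolding Lib0_def map_of_map by auto

section \<open>Soundness\<close>

definition "semEV a b c \<longleftrightarrow> (\<forall>f xs. tm f = a \<longrightarrow> LN xs = b \<longrightarrow> (\<exists>z. tmn z = c \<and> eval f xs z))"
definition "semEVS a b c \<longleftrightarrow> (\<forall>gs xs. LR gs = a \<longrightarrow> LN xs = b \<longrightarrow>
   (\<exists>ys. LN ys = c \<and> list_all2 (\<lambda>g y. eval g xs y) gs ys))"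
definition "semNTH a b c \<longleftrightarrow> (\<forall>xs i. LN xs = a \<longrightarrow> tmn i = b \<longrightarrow> i < length xs \<and> tmn (xs ! i) = c)"
definition "semMNB a b c \<longleftrightarrow> (\<forall>f xs. tm f = a \<longrightarrow> LN xs = b \<longrightarrow>
   (\<exists>n. tmn n = c \<and> (\<forall>m<n. \<exists>y. eval f (m # xs) (Suc y))))"
definition "semH a b \<longleftrightarrow> (\<forall>f n. tm f = a \<longrightarrow> tmn n = b \<longrightarrow> (\<exists>z. eval f [n] z))"

fun sem :: "btype \<Rightarrow> bool" where
  "sem (TCon c [a,b,d]) = (if c = (10,3) then semEV a b d else if c = (11,3) then semEVS a b d
     else if c = (12,3) then semNTH a b d else if c = (13,3) then semMNB a b d else False)"
| "sem (TCon c [a,b]) = (if c = (14,2) then semH a b else False)"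
| "sem _ = False"

lemma c0: "semEV (TCon (4,0) []) a ZZ"
  unfolding semEV_def by (auto intro: eval.intros)
lemma c1: "semEV (TCon (5,0) []) (CONS a b) (SS a)"
  unfolding semEV_def by (auto intro: eval.intros)
lemma c2: "semNTH b a c \<Longrightarrow> semEV (TCon (6,1) [a]) b c"
  unfolding semEV_def semNTH_def by (auto intro: eval.intros)
lemma c3: "semEVS b c d \<Longrightarrow> semEV a d e \<Longrightarrow> semEV (TCon (7,2) [a, b]) c e"
  unfolding semEV_def semEVS_def
proof (intro allI impI)
  fix f xs assume h1: "\<forall>gs xs. LR gs = b \<longrightarrow> LN xs = c \<longrightarrow> (\<exists>ys. LN ys = d \<and> list_all2 (\<lambda>g. eval g xs) gs ys)"
    and h2: "\<forall>f xs. tm f = a \<longrightarrow> LN xs = d \<longrightarrow> (\<exists>z. tmn z = e \<and> eval f xs z)"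
    and h3: "tm f = TCon (7, 2) [a, b]" and h4: "LN xs = c"
  from h3 obtain f1 gs where f: "f = Comp f1 gs" "tm f1 = a" "LR gs = b" by auto
  from h1 f h4 obtain ys where ys: "LN ys = d" "list_all2 (\<lambda>g. eval g xs) gs ys" by blast
  from h2 f ys obtain z where "tmn z = e" "eval f1 ys z" by blast
  then show "\<exists>z. tmn z = e \<and> eval f xs z" using f ys by (auto intro: eval.intros)
qed
lemma c4: "semEVS NIL a NIL"
  unfolding semEVS_def by auto
lemma c5: "semEV a c d \<Longrightarrow> semEVS b c e \<Longrightarrow> semEVS (CONS a b) c (CONS d e)"
  unfolding semEV_def semEVS_def
proof (intro allI impI)
  fix gs xs assume h1: "\<forall>f xs. tm f = a \<longrightarrow> LN xs = c \<longrightarrow> (\<exists>z. tmn z = d \<and> eval f xs z)"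
    and h2: "\<forall>gs xs. LR gs = b \<longrightarrow> LN xs = c \<longrightarrow> (\<exists>ys. LN ys = e \<and> list_all2 (\<lambda>g. eval g xs) gs ys)"
    and h3: "LR gs = CONS a b" and h4: "LN xs = c"
  from h3 obtain g gs' where g: "gs = g # gs'" "tm g = a" "LR gs' = b" by auto
  from h1 g h4 obtain z where z: "tmn z = d" "eval g xs z" by blast
  from h2 g h4 obtain ys where ys: "LN ys = e" "list_all2 (\<lambda>g. eval g xs) gs' ys" by blast
  show "\<exists>ys. LN ys = CONS d e \<and> list_all2 (\<lambda>g. eval g xs) gs ys"
    by (rule exI[of _ "z # ys"]) (use g z ys in auto)
qed
lemma c6: "semEV a c d \<Longrightarrow> semEV (TCon (8,2) [a, b]) (CONS ZZ c) d"
  unfolding semEV_def by (fastforce intro: eval_Prim0)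
lemma c7: "semEV (TCon (8,2) [a, b]) (CONS c d) e \<Longrightarrow> semEV b (CONS e (CONS c d)) h \<Longrightarrow>
  semEV (TCon (8,2) [a, b]) (CONS (SS c) d) h"
  unfolding semEV_def
proof (intro allI impI)
  fix f xs assume h1: "\<forall>f xs. tm f = TCon (8,2) [a, b] \<longrightarrow> LN xs = CONS c d \<longrightarrow> (\<exists>z. tmn z = e \<and> eval f xs z)"
    and h2: "\<forall>f xs. tm f = b \<longrightarrow> LN xs = CONS e (CONS c d) \<longrightarrow> (\<exists>z. tmn z = h \<and> eval f xs z)"
    and h3: "tm f = TCon (8, 2) [a, b]" and h4: "LN xs = CONS (SS c) d"
  from h3 obtain f1 g1 where f: "f = Prim f1 g1" "tm f1 = a" "tm g1 = b" by auto
  from h4 obtain n xs' where x: "xs = Suc n # xs'" "tmn n = c" "LN xs' = d" by auto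
  from h1 h3 x obtain y where y: "tmn y = e" "eval f (n # xs') y" by fastforce
  from h2 f x y obtain z where z: "tmn z = h" "eval g1 (y # n # xs') z" by fastforce
  show "\<exists>z. tmn z = h \<and> eval f xs z" using f x y z by (auto intro: eval.intros)
qed
lemma c8: "semEV a (CONS c b) ZZ \<Longrightarrow> semMNB a b c \<Longrightarrow> semEV (TCon (9,1) [a]) b c"
  unfolding semEV_def semMNB_def
proof (intro allI impI)
  fix f xs assume h1: "\<forall>f xs. tm f = a \<longrightarrow> LN xs = CONS c b \<longrightarrow> (\<exists>z. tmn z = ZZ \<and> eval f xs z)"
    and h2: "\<forall>f xs. tm f = a \<longrightarrow> LN xs = b \<longrightarrow> (\<exists>n. tmn n = c \<and> (\<forall>m<n. \<exists>y. eval f (m # xs) (Suc y)))"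
    and h3: "tm f = TCon (9, 1) [a]" and h4: "LN xs = b"
  from h3 obtain f1 where f: "f = Mn f1" "tm f1 = a" by auto
  from h2 f h4 obtain n where n: "tmn n = c" "\<forall>m<n. \<exists>y. eval f1 (m # xs) (Suc y)" by blast
  from h1 f h4 n have "eval f1 (n # xs) 0" by fastforce
  then show "\<exists>z. tmn z = c \<and> eval f xs z" using f n by (auto intro: eval.intros)
qed
lemma c9: "semMNB a b ZZ"
  unfolding semMNB_def by auto
lemma c10: "semMNB a b c \<Longrightarrow> semEV a (CONS c b) (SS d) \<Longrightarrow> semMNB a b (SS c)"
  unfolding semEV_def semMNB_def
proof (intro allI impI)
  fix f xs assume h2: "\<forall>f xs. tm f = a \<longrightarrow> LN xs = CONS c b \<longrightarrow> (\<exists>z. tmn z = SS d \<and> eval f xs z)"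
    and h1: "\<forall>f xs. tm f = a \<longrightarrow> LN xs = b \<longrightarrow> (\<exists>n. tmn n = c \<and> (\<forall>m<n. \<exists>y. eval f (m # xs) (Suc y)))"
    and h3: "tm f = a" and h4: "LN xs = b"
  from h1 h3 h4 obtain n where n: "tmn n = c" "\<forall>m<n. \<exists>y. eval f (m # xs) (Suc y)" by blast
  from h2 h3 h4 n obtain y where "eval f (n # xs) (Suc y)" by fastforce
  then have "\<forall>m<Suc n. \<exists>y. eval f (m # xs) (Suc y)" using n less_Suc_eq by auto
  then show "\<exists>n. tmn n = SS c \<and> (\<forall>m<n. \<exists>y. eval f (m # xs) (Suc y))" using n by auto
qed
lemma c11: "semNTH (CONS a b) ZZ a"
  unfolding semNTH_def by auto
lemma c12: "semNTH b c d \<Longrightarrow> semNTH (CONS a b) (SS c) d"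
  unfolding semNTH_def by fastforce
lemma c13: "semEV a (CONS b NIL) c \<Longrightarrow> semH a b"
  unfolding semEV_def semH_def by fastforce

lemma clause_sound: "T \<in> set CL \<Longrightarrow> \<forall>b\<in>set (args (subst_ty \<sigma> T)). sem b \<Longrightarrow> sem (res (subst_ty \<sigma> T))"
  unfolding CL_def
  apply (simp only: set_simps insert_iff empty_iff)
  apply (elim disjE)
  apply (simp_all del: One_nat_def add: c0 c1 c2 c3 c4 c5 c6 c7 c8 c9 c10 c11 c12 c13)
  apply (blast intro: c3 c7 c10)+
  done


lemma la2_set2: "list_all2 P xs ys \<Longrightarrow> \<forall>y\<in>set ys. \<exists>x. P x y"
  by (induction rule: list_all2_induct) auto

lemma sound: "has_type_a Lib \<Gamma> e b \<Longrightarrow> Lib = Lib0 \<Longrightarrow> \<Gamma> = Map.empty \<Longrightarrow> sem b"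
proof (induction rule: has_type_a.induct)
  case (T_Var \<Gamma> x b Lib) then show ?case by simp
next
  case (T_App Lib c vs T \<sigma> bs b \<Gamma> es)
  from T_App.hyps(1) T_App.prems have "c < length CL" "T = CL ! c" by (auto simp: map_of_Lib0)
  then have "T \<in> set CL" by simp
  moreover have "\<forall>b\<in>set (args (subst_ty \<sigma> T)). sem b"
    using la2_set2[OF T_App.IH] T_App.hyps(4) T_App.prems by blast
  ultimately show ?case using clause_sound T_App.hyps(5) by blast
qed

definition D :: "btype \<Rightarrow> bool" where "D b \<longleftrightarrow> (\<exists>e. has_type_a Lib0 Map.empty e b)"

definition sg :: "btype list \<Rightarrow> nat \<Rightarrow> btype" where
  "sg ws a = (if a < length ws then ws ! a else TCon (2,0) [])"

lemma ground_subst_b: "\<forall>a. tvars_b (\<sigma> a) = {} \<Longrightarrow> tvars_b (subst_b \<sigma> b) = {}"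
  by (induction b) auto
lemma ground_subst: "\<forall>a. tvars_b (\<sigma> a) = {} \<Longrightarrow> tvars (subst_ty \<sigma> T) = {}"
  by (induction T) (auto simp: ground_subst_b)

lemma ex_la2: "\<forall>y\<in>set ys. \<exists>x. P x y \<Longrightarrow> \<exists>xs. list_all2 P xs ys"
proof (induction ys)
  case Nil then show ?case by auto
next
  case (Cons y ys)
  then obtain x xs where "P x y" "list_all2 P xs ys" by auto
  then show ?case by (intro exI[of _ "x # xs"]) auto
qed

lemma use_clause: "i < length CL \<Longrightarrow> \<forall>w\<in>set ws. wf_btype w \<and> tvars_b w = {} \<Longrightarrow>
  \<forall>b\<in>set (args (subst_ty (sg ws) (CL ! i))). D b \<Longrightarrow> res (subst_ty (sg ws) (CL ! i)) = b \<Longrightarrow> D b"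
proof -
  assume i: "i < length CL" and ws: "\<forall>w\<in>set ws. wf_btype w \<and> tvars_b w = {}"
    and a: "\<forall>b\<in>set (args (subst_ty (sg ws) (CL ! i))). D b" and r: "res (subst_ty (sg ws) (CL ! i)) = b"
  have "\<forall>y\<in>set (args (subst_ty (sg ws) (CL ! i))). \<exists>x. has_type_a Lib0 Map.empty x y"
    using a unfolding D_def by blast
  from ex_la2[OF this] obtain es where es: "list_all2 (has_type_a Lib0 Map.empty) es (args (subst_ty (sg ws) (CL ! i)))"
    by blast
  have wf: "\<forall>a. wf_btype (sg ws a)" using ws by (auto simp: sg_def)
  have gr: "\<forall>a. tvars_b (sg ws a) = {}" using ws by (auto simp: sg_def)
  have m: "map_of Lib0 i = Some ([0..<10], CL ! i)" using i by (simp add: map_of_Lib0)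
  have g: "ground_ty (subst_ty (sg ws) (CL ! i))" unfolding ground_ty_def using gr by (rule ground_subst)
  have "has_type_a Lib0 Map.empty (C i es) b"
    by (rule T_App[OF m wf g refl r es])
  then show "D b" unfolding D_def by blast
qed

lemma wf_tmn: "wf_btype (tmn n) \<and> tvars_b (tmn n) = {}" by (induction n) auto
lemma wf_lst: "\<forall>b\<in>set bs. wf_btype b \<and> tvars_b b = {} \<Longrightarrow> wf_btype (lst bs) \<and> tvars_b (lst bs) = {}"
  by (induction bs) auto
lemma wf_LN: "wf_btype (LN xs) \<and> tvars_b (LN xs) = {}" by (rule wf_lst) (auto simp: wf_tmn)
lemma wf_tm: "wf_btype (tm f) \<and> tvars_b (tm f) = {}"
  by (induction f) (auto simp: wf_tmn intro!: wf_lst)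
lemma wf_LR: "wf_btype (LR xs) \<and> tvars_b (LR xs) = {}" by (rule wf_lst) (auto simp: wf_tm)

lemmas wfs = wf_tmn wf_LN wf_tm wf_LR


lemma nth_c: "i < length xs \<Longrightarrow> D (NTH (LN xs) (tmn i) (tmn (xs ! i)))"
proof (induction xs arbitrary: i)
  case Nil then show ?case by simp
next
  case (Cons x xs)
  show ?case
  proof (cases i)
    case 0 then show ?thesis
      by (intro use_clause[where i=11 and ws="[tmn x, LN xs]"]) (simp_all add: CL_def sg_def wfs)
  next
    case (Suc j)
    with Cons have ih: "D (NTH (LN xs) (tmn j) (tmn (xs ! j)))" by simp
    show ?thesis using Suc
      by (intro use_clause[where i=12 and ws="[tmn x, LN xs, tmn j, tmn (xs ! j)]"])
         (use ih in \<open>simp_all add: CL_def sg_def wfs\<close>)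
  qed
qed

lemma evs_c: "list_all2 (\<lambda>g y. eval g xs y \<and> D (EV (tm g) (LN xs) (tmn y))) gs ys \<Longrightarrow>
  D (EVS (LR gs) (LN xs) (LN ys))"
proof (induction rule: list_all2_induct)
  case Nil then show ?case
    by (intro use_clause[where i=4 and ws="[LN xs]"]) (simp_all add: CL_def sg_def wfs)
next
  case (Cons g gs y ys)
  then show ?case
    by (intro use_clause[where i=5 and ws="[tm g, LR gs, LN xs, tmn y, LN ys]"])
       (use Cons in \<open>simp_all add: CL_def sg_def wfs\<close>)
qed

lemma mnb_c: "\<forall>m<n. \<exists>y. D (EV (tm f) (LN (m # xs)) (tmn (Suc y))) \<Longrightarrow> D (MNB (tm f) (LN xs) (tmn n))"
proof (induction n)
  case 0 then show ?case
    by (intro use_clause[where i=9 and ws="[tm f, LN xs]"]) (simp_all add: CL_def sg_def wfs)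
next
  case (Suc n)
  then have ih: "D (MNB (tm f) (LN xs) (tmn n))" by simp
  from Suc.prems obtain y where y: "D (EV (tm f) (LN (n # xs)) (tmn (Suc y)))" by blast
  show ?case
    by (intro use_clause[where i=10 and ws="[tm f, LN xs, tmn n, tmn y]"])
       (use ih y in \<open>simp_all add: CL_def sg_def wfs\<close>)
qed

lemma complete: "eval f xs z \<Longrightarrow> D (EV (tm f) (LN xs) (tmn z))"
proof (induction rule: eval.induct)
  case (eval_Zero xs) then show ?case
    by (intro use_clause[where i=0 and ws="[LN xs]"]) (simp_all add: CL_def sg_def wfs)
next
  case (eval_Succ x xs) then show ?case
    by (intro use_clause[where i=1 and ws="[tmn x, LN xs]"]) (simp_all add: CL_def sg_def wfs)
next
  case (eval_Proj i xs)
  have n: "D (NTH (LN xs) (tmn i) (tmn (xs ! i)))" using nth_c eval_Proj by blast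
  show ?case
    by (intro use_clause[where i=2 and ws="[tmn i, LN xs, tmn (xs ! i)]"]) (use n in \<open>simp_all add: CL_def sg_def wfs\<close>)
next
  case (eval_Comp xs gs ys f z)
  have e: "D (EVS (LR gs) (LN xs) (LN ys))" by (rule evs_c[OF eval_Comp.IH(1)])
  show ?case
    by (intro use_clause[where i=3 and ws="[tm f, LR gs, LN xs, LN ys, tmn z]"])
       (use e eval_Comp.IH(2) in \<open>simp_all add: CL_def sg_def wfs\<close>)
next
  case (eval_Prim0 f xs y g) then show ?case
    by (intro use_clause[where i=6 and ws="[tm f, tm g, LN xs, tmn y]"]) (simp_all add: CL_def sg_def wfs)
next
  case (eval_PrimS f g n xs y z) then show ?case
    by (intro use_clause[where i=7 and ws="[tm f, tm g, tmn n, LN xs, tmn y, tmn z]"]) (simp_all add: CL_def sg_def wfs)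
next
  case (eval_Mn f n xs)
  have m: "D (MNB (tm f) (LN xs) (tmn n))" by (rule mnb_c) (use eval_Mn.IH(2) in blast)
  show ?case
    by (intro use_clause[where i=8 and ws="[tm f, LN xs, tmn n]"]) (use m eval_Mn.IH(1) in \<open>simp_all add: CL_def sg_def wfs\<close>)
qed

lemma halt_c: "eval f [n] z \<Longrightarrow> D (HALT (tm f) (tmn n))"
  using complete[of f "[n]" z]
  by (intro use_clause[where i=13 and ws="[tm f, tmn n, tmn z]"]) (simp_all add: CL_def sg_def wfs)

lemma halt_s: "D (HALT (tm f) (tmn n)) \<Longrightarrow> \<exists>z. eval f [n] z"
proof -
  assume "D (HALT (tm f) (tmn n))"
  then obtain e where "has_type_a Lib0 Map.empty e (HALT (tm f) (tmn n))" unfolding D_def by blast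
  then have "sem (HALT (tm f) (tmn n))" using sound by blast
  then show ?thesis by (simp add: semH_def)
qed



lemma enc_b_inj: "enc_b a = enc_b b \<Longrightarrow> a = b"
proof (induction a arbitrary: b)
  case (TVar x) then show ?case by (cases b) (auto simp: prod_encode_eq)
next
  case (TCon c bs)
  show ?case
  proof (cases b)
    case (TVar y) then show ?thesis using TCon.prems by (auto simp: prod_encode_eq)
  next
    case (TCon c' bs')
    with TCon.prems have c: "c = c'" and m: "map enc_b bs = map enc_b bs'"
      by (auto simp: prod_encode_eq list_encode_eq)
    have "bs = bs'" using m TCon.IH
    proof (induction bs arbitrary: bs')
      case Nil then show ?case by simp
    next
      case (Cons x xs) then show ?case by (cases bs') auto
    qed
    then show ?thesis using c TCon by simp
  qed
qed

lemma enc_ty_inj: "enc_ty a = enc_ty b \<Longrightarrow> a = b"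
proof (induction a arbitrary: b)
  case (Base x) then show ?case by (cases b) (auto simp: prod_encode_eq enc_b_inj)
next
  case (Arr x t) then show ?case by (cases b) (auto simp: prod_encode_eq enc_b_inj)
qed

lemma enc_poly_inj: "enc_poly p = enc_poly q \<Longrightarrow> p = q"
  unfolding enc_poly_def by (cases p; cases q) (auto simp: prod_encode_eq list_encode_eq enc_ty_inj)

lemma enc_library_inj: "enc_library a = enc_library b \<Longrightarrow> a = b"
proof -
  have inj: "inj (\<lambda>(c, p). prod_encode (c, enc_poly p))"
    by (auto simp: inj_def prod_encode_eq enc_poly_inj)
  assume "enc_library a = enc_library b"
  then have "map (\<lambda>(c, p). prod_encode (c, enc_poly p)) a = map (\<lambda>(c, p). prod_encode (c, enc_poly p)) b"
    unfolding enc_library_def by (simp add: list_encode_eq)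
  then show "a = b" using inj by (simp add: inj_map_eq_map)
qed

lemma enc_problem_inj: "enc_problem L1 t1 = enc_problem L2 t2 \<Longrightarrow> L1 = L2 \<and> t1 = t2"
  unfolding enc_problem_def by (auto simp: prod_encode_eq enc_library_inj enc_ty_inj)

lemma has_type_Base: "has_type Lib \<Gamma> E (Base b) \<Longrightarrow> \<exists>e. has_type_a Lib \<Gamma> e b"
  by (cases rule: has_type.cases) auto

lemma wf_Lib0: "wf_library Lib0"
proof -
  have "map fst Lib0 = [0..<length CL]" unfolding Lib0_def by (simp add: comp_def)
  moreover have "\<forall>T\<in>set CL. wf_ty T \<and> tvars T \<subseteq> {0..<10}" unfolding CL_def by simp
  ultimately show ?thesis unfolding wf_library_def wf_poly_def Lib0_def by auto
qed

lemma red: "enc_problem Lib0 (Base (HALT (tm f) (tmn n))) \<in> SYNTH \<longleftrightarrow> (\<exists>z. eval f [n] z)"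
proof
  assume "enc_problem Lib0 (Base (HALT (tm f) (tmn n))) \<in> SYNTH"
  then obtain Lib t E where "enc_problem Lib0 (Base (HALT (tm f) (tmn n))) = enc_problem Lib t"
    and "has_type Lib Map.empty E t" unfolding SYNTH_def by blast
  then have "has_type Lib0 Map.empty E (Base (HALT (tm f) (tmn n)))" using enc_problem_inj by metis
  then have "D (HALT (tm f) (tmn n))" unfolding D_def using has_type_Base by blast
  then show "\<exists>z. eval f [n] z" by (rule halt_s)
next
  assume "\<exists>z. eval f [n] z"
  then obtain z where "eval f [n] z" by blast
  then have "D (HALT (tm f) (tmn n))" by (rule halt_c)
  then obtain e where "has_type_a Lib0 Map.empty e (HALT (tm f) (tmn n))" unfolding D_def by blast
  then have "has_type Lib0 Map.empty (A e) (Base (HALT (tm f) (tmn n)))" by (rule T_Base)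
  moreover have "wf_ty (Base (HALT (tm f) (tmn n)))" "ground_ty (Base (HALT (tm f) (tmn n)))"
    using wf_tm[of f] wf_tmn[of n] by (auto simp: ground_ty_def)
  ultimately show "enc_problem Lib0 (Base (HALT (tm f) (tmn n))) \<in> SYNTH"
    unfolding SYNTH_def using wf_Lib0 by blast
qed

definition c0 :: nat where "c0 = enc_b (TCon (0,0) [])"

lemma enc_tmn: "enc_b (tmn n) = (step ^^ n) c0"
  by (induction n) (simp_all add: c0_def step_def)

definition Qv :: "nat \<Rightarrow> nat" where
  "Qv n = prod_encode (enc_library Lib0, prod_encode (0, prod_encode (1, prod_encode (prod_encode (14,2),
     Suc (prod_encode (n, Suc (prod_encode ((step ^^ n) c0, 0))))))))"

lemma Qv: "Qv (enc_b (tm g)) = enc_problem Lib0 (Base (HALT (tm g) (tmn (enc_b (tm g)))))"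
  unfolding Qv_def enc_problem_def by (simp add: enc_tmn)

definition Q :: recf where
  "Q = Comp PE [KON (enc_library Lib0), Comp PE [KON 0, Comp PE [KON 1, Comp PE [KON (prod_encode (14,2)),
     Comp Succ [Comp PE [Proj 0, Comp Succ [Comp PE [Comp (NE c0) [Proj 0], KON 0]]]]]]]]"

lemma Q: "eval Q [n] (Qv n)"
  unfolding Q_def Qv_def by (rule PE2 KON SUC1 proj0 comp1[OF NE])+

definition P :: recf where "P = Prim (Comp Succ [Zero]) Zero"

lemma P0: "eval P [0] 1"
  unfolding P_def by (rule eval_Prim0) (rule comp1[of _ 0], auto intro: eval.intros)
lemma P1: "eval P [1] 0"
proof -
  have "eval P [0] 1" by (rule P0)
  then have "eval P [Suc 0] 0" unfolding P_def by (rule eval_PrimS) (rule eval_Zero)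
  then show ?thesis by simp
qed

theorem mainTheorem13:
  shows "\<not> decidable SYNTH"
proof
  assume "decidable SYNTH"
  then obtain d where d: "\<And>n. (n \<in> SYNTH \<longrightarrow> eval d [n] 0) \<and> (n \<notin> SYNTH \<longrightarrow> eval d [n] 1)"
    unfolding decidable_def by blast
  define g where "g = Comp (Mn (Proj 1)) [Comp P [Comp d [Q]]]"
  define c where "c = enc_b (tm g)"
  define q where "q = Qv c"
  have q: "q \<in> SYNTH \<longleftrightarrow> (\<exists>z. eval g [c] z)"
    unfolding q_def c_def Qv using red .
  show False
  proof (cases "q \<in> SYNTH")
    case True
    then have "eval d [q] 0" using d by blast
    then have "eval (Comp d [Q]) [c] 0" unfolding q_def by (rule comp1) (rule Q)
    then have a: "eval (Comp P [Comp d [Q]]) [c] 1" by (rule comp1[OF P0])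
    from True q obtain z where "eval g [c] z" by blast
    then obtain ys where ys: "list_all2 (\<lambda>g y. eval g [c] y) [Comp P [Comp d [Q]]] ys"
      and m: "eval (Mn (Proj 1)) ys z" unfolding g_def by (rule evCompE) simp
    from ys obtain u where u: "ys = [u]" "eval (Comp P [Comp d [Q]]) [c] u" by (cases ys) auto
    with a have "u = 1" using eval_det by blast
    with m u have "eval (Mn (Proj 1)) [1] z" by simp
    then have "eval (Proj 1) [z, 1] 0" by (rule evMnE) simp
    then show False by (rule evProjE) simp
  next
    case False
    then have "eval d [q] 1" using d by blast
    then have "eval (Comp d [Q]) [c] 1" unfolding q_def by (rule comp1) (rule Q)
    then have a: "eval (Comp P [Comp d [Q]]) [c] 0" by (rule comp1[OF P1])
    have b: "eval (Mn (Proj 1)) [0] 0" by (rule eval_Mn) (auto intro: proj1 proj1')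
    have "eval g [c] 0" unfolding g_def by (rule comp1[OF b a])
    then show False using False q by blast
  qed
qed


end
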